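(* Let $D$ be a nonempty closed subset of $\mathbb R$ with $D\subseteq(0,1)$. Let $c:[0,1]\to[0,\infty]$ be grounded and lower semicontinuous with $c(1)=\infty$, and let $\succsim$ be the binary relation on $l_\infty$ represented by $I(x)=\min_{\delta\in[0,1)}\{(1-\delta)\sum_{t\ge0}\delta^tx_t+c(\delta)\}$ (i.e. $x\succsim y\iff I(x)\ge I(y)$). Then the following are equivalent: (i) $\succsim$ satisfies Unanimity: for all $x,y\in l_\infty$, if $(1-\delta)\sum_t\delta^tx_t\ge(1-\delta)\sum_t\delta^ty_t$ for all $\delta\in D$, then $x\succsim y$; (ii) $c(\delta)=\infty$ for every $\delta\in[0,1]\setminus D$. Consequently, under (i), $I(x)=\min_{\delta\in D}\{(1-\delta)\sum_{t\ge0}\delta^tx_t+c(\delta)\}$.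
   Context: $l_\infty$: real bounded sequences $x=(x_0,x_1,\dots)$. A function is grounded if its infimum is $0$. Convention $0^0=1$. *)

theory Defs
  imports "HOL-Analysis.Analysis"
begin

text \<open>Discounted utility (1 - d) * sum_t d^t x_t  (with 0^0 = 1, as in Isabelle).\<close>
definition disc_util :: "real \<Rightarrow> (nat \<Rightarrow> real) \<Rightarrow> real" where
  "disc_util d x = (1 - d) * (\<Sum>t. d ^ t * x t)"

definition obj_val :: "(real \<Rightarrow> ereal) \<Rightarrow> (nat \<Rightarrow> real) \<Rightarrow> real \<Rightarrow> ereal" where
  "obj_val c x d = ereal (disc_util d x) + c d"

text \<open>The representing functional I(x) = min over d in [0,1) (written as infimum).\<close>
definition I_fun :: "(real \<Rightarrow> ereal) \<Rightarrow> (nat \<Rightarrow> real) \<Rightarrow> ereal" where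
  "I_fun c x = (INF d\<in>{0..<1}. obj_val c x d)"

definition pref :: "(real \<Rightarrow> ereal) \<Rightarrow> (nat \<Rightarrow> real) \<Rightarrow> (nat \<Rightarrow> real) \<Rightarrow> bool" where
  "pref c x y \<longleftrightarrow> I_fun c x \<ge> I_fun c y"

definition grounded_on :: "real set \<Rightarrow> (real \<Rightarrow> ereal) \<Rightarrow> bool" where
  "grounded_on S c \<longleftrightarrow> (INF d\<in>S. c d) = 0"

definition lsc_on :: "real set \<Rightarrow> (real \<Rightarrow> ereal) \<Rightarrow> bool" where
  "lsc_on S c \<longleftrightarrow> (\<forall>a::ereal. closedin (top_of_set S) {d\<in>S. c d \<le> a})"

definition unanimity :: "real set \<Rightarrow> ((nat \<Rightarrow> real) \<Rightarrow> (nat \<Rightarrow> real) \<Rightarrow> bool) \<Rightarrow> bool" where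
  "unanimity D R \<longleftrightarrow> (\<forall>x y. Bseq x \<longrightarrow> Bseq y \<longrightarrow>
      (\<forall>d\<in>D. disc_util d x \<ge> disc_util d y) \<longrightarrow> R x y)"

end

theory Submission
  imports Defs
begin


lemma cont_u:
  assumes "Bseq x" "\<bar>d\<bar> < 1"
  shows "isCont (\<lambda>d. disc_util d x) d"
proof -
  obtain B where B: "B > 0" "\<And>n. norm (x n) \<le> B" using assms(1) by (meson BseqE)
  define K where "K = (1 + \<bar>d\<bar>) / 2"
  have K: "0 \<le> K" "K < 1" "\<bar>d\<bar> < K" using assms(2) by (auto simp: K_def)
  have "summable (\<lambda>n. B * K ^ n)" using K by (auto intro!: summable_mult summable_geometric)
  hence "summable (\<lambda>n. x n * K ^ n)"
    by (rule summable_comparison_test'[where N=0]) (use B K in \<open>auto simp: abs_mult intro!: mult_right_mono\<close>)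
  hence "isCont (\<lambda>d. \<Sum>n. x n * d ^ n) d" by (rule isCont_powser) (use K in auto)
  hence "isCont (\<lambda>d. (1 - d) * (\<Sum>n. x n * d ^ n)) d" by (intro continuous_intros)
  thus ?thesis unfolding disc_util_def by (simp add: mult.commute)
qed

lemma disc_z:
  "disc_util d (\<lambda>t. M * (if t=0 then a else if t=1 then b else if t=2 then 1 else 0))
   = M * (1 - d) * (a + b*d + d^2)"
proof -
  have "(\<Sum>t. d ^ t * (M * (if t=0 then a else if t=1 then b else if t=2 then 1 else 0)))
      = (\<Sum>t\<in>{0,1,2}. d ^ t * (M * (if t=0 then a else if t=1 then b else if t=2 then 1 else 0)))"
    by (rule suminf_finite) auto
  also have "\<dots> = M * (a + b*d + d^2)" by (simp add: algebra_simps power2_eq_square)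
  finally show ?thesis unfolding disc_util_def by simp
qed



lemma I_zero_nonneg:
  assumes "\<forall>d\<in>{0..1}. c d \<ge> 0"
  shows "I_fun c (\<lambda>t. 0) \<ge> 0"
  unfolding I_fun_def obj_val_def disc_util_def using assms by (auto intro!: INF_greatest)

lemma P_imp_U:
  assumes "D \<subseteq> {0<..<1}" "\<forall>d\<in>{0..1} - D. c d = \<infinity>"
  shows "unanimity D (pref c)"
  unfolding unanimity_def pref_def
proof (intro allI impI)
  fix x y :: "nat \<Rightarrow> real"
  assume h: "\<forall>d\<in>D. disc_util d y \<le> disc_util d x"
  show "I_fun c y \<le> I_fun c x"
    unfolding I_fun_def
  proof (rule INF_greatest)
    fix d assume d: "d \<in> {0..<1::real}"
    show "(INF d\<in>{0..<1}. obj_val c y d) \<le> obj_val c x d"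
    proof (cases "d \<in> D")
      case True
      have "(INF d\<in>{0..<1}. obj_val c y d) \<le> obj_val c y d" using d by (rule INF_lower)
      also have "\<dots> \<le> obj_val c x d" unfolding obj_val_def
        using h True by (intro add_right_mono) auto
      finally show ?thesis .
    next
      case False
      then have "c d = \<infinity>" using assms d by auto
      then show ?thesis unfolding obj_val_def by simp
    qed
  qed
qed

lemma U_imp_P:
  assumes U: "unanimity D (pref c)" and cl: "closed D"
    and nn: "\<forall>d\<in>{0..1}. c d \<ge> 0" and D: "D \<subseteq> {0<..<1}" and c1: "c 1 = \<infinity>"
  shows "\<forall>d\<in>{0..1} - D. c d = \<infinity>"
proof (rule ccontr)
  assume "\<not> ?thesis"
  then obtain d0 where d0: "d0 \<in> {0..1}" "d0 \<notin> D" "c d0 \<noteq> \<infinity>" by auto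
  have "d0 \<noteq> 1" using c1 d0 by auto
  with d0 have d01: "0 \<le> d0" "d0 < 1" by auto
  from d0 nn have "c d0 \<ge> 0" by auto
  with d0(3) obtain K where K: "c d0 = ereal K" "K \<ge> 0" by (cases "c d0") auto
  have "open (- D)" using cl by auto
  then obtain e where e: "e > 0" "ball d0 e \<subseteq> - D" using d0(2) open_contains_ball by blast
  define M where "M = (K + 1) / ((1 - d0) * e^2)"
  have M: "M > 0" using e d01 K by (auto simp: M_def)
  define z where "z = (\<lambda>t::nat. M * (if t=0 then d0^2 - e^2 else if t=1 then -2*d0 else if t=2 then 1 else 0))"
  have zu: "disc_util d z = M * (1 - d) * ((d0^2 - e^2) + (-2*d0)*d + d^2)" for d
    unfolding z_def by (rule disc_z)
  have Bz: "Bseq z"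
  proof (rule BseqI')
    fix n show "norm (z n) \<le> \<bar>z 0\<bar> + \<bar>z 1\<bar> + \<bar>z 2\<bar>"
      unfolding z_def by auto
  qed
  have B0: "Bseq (\<lambda>t::nat. 0::real)" by simp
  have "\<forall>d\<in>D. disc_util d (\<lambda>t. 0) \<le> disc_util d z"
  proof
    fix d assume dD: "d \<in> D"
    then have "d \<notin> ball d0 e" using e by auto
    then have "e \<le> \<bar>d - d0\<bar>" by (auto simp: dist_real_def abs_minus_commute)
    then have "e^2 \<le> (d - d0)^2" using e
      by (metis abs_ge_zero less_le power2_abs power_mono)
    then have "0 \<le> (d0^2 - e^2) + (-2*d0)*d + d^2" by (simp add: power2_eq_square algebra_simps)
    moreover have "0 \<le> 1 - d" using dD D by auto
    ultimately show "disc_util d (\<lambda>t. 0) \<le> disc_util d z"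
      unfolding zu using M by (simp add: disc_util_def)
  qed
  then have "pref c z (\<lambda>t. 0)" using U Bz B0 unfolding unanimity_def by blast
  then have ge: "I_fun c z \<ge> 0" unfolding pref_def using I_zero_nonneg[OF nn] by (rule order.trans[rotated])
  have "I_fun c z \<le> obj_val c z d0" unfolding I_fun_def using d01 by (intro INF_lower) auto
  also have "disc_util d0 z = - (K + 1)"
    unfolding zu using d01 e by (simp add: M_def power2_eq_square field_simps)
  then have "obj_val c z d0 = ereal (-1)" unfolding obj_val_def K by simp
  finally have "I_fun c z \<le> ereal (-1)" .
  with ge have "(0::ereal) \<le> ereal (-1)" by (rule order.trans)
  then show False by simp
qed

lemma P_imp_min:
  assumes P: "\<forall>d\<in>{0..1} - D. c d = \<infinity>" and cl: "closed D" and ne: "D \<noteq> {}"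
    and nn: "\<forall>d\<in>{0..1}. c d \<ge> 0" and D: "D \<subseteq> {0<..<1}" and lsc: "lsc_on {0..1} c"
    and x: "Bseq x"
  shows "\<exists>d\<in>D. I_fun c x = obj_val c x d \<and> (\<forall>d'\<in>D. obj_val c x d \<le> obj_val c x d')"
proof -
  define u where "u = (\<lambda>d. disc_util d x)"
  define m where "m = (INF d\<in>D. obj_val c x d)"
  have cpt: "compact D" using cl D unfolding compact_eq_bounded_closed by (auto intro: bounded_subset[of "{0<..<1}"])
  have cu: "continuous_on D u" unfolding u_def
    by (intro continuous_at_imp_continuous_on ballI cont_u[OF x]) (use D in auto)
  have Im: "I_fun c x = m"
  proof (rule antisym)
    show "I_fun c x \<le> m" unfolding I_fun_def m_def using D by (intro INF_superset_mono) auto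
    show "m \<le> I_fun c x" unfolding I_fun_def
    proof (rule INF_greatest)
      fix d assume d: "d \<in> {0..<1::real}"
      show "m \<le> obj_val c x d"
      proof (cases "d \<in> D")
        case True then show ?thesis unfolding m_def by (rule INF_lower)
      next
        case False then have "c d = \<infinity>" using P d by auto
        then show ?thesis by (simp add: obj_val_def)
      qed
    qed
  qed
  have ml: "obj_val c x d \<ge> m" if "d \<in> D" for d unfolding m_def using that by (rule INF_lower)
  obtain d' where "d' \<in> D" using ne by auto
  show ?thesis
  proof (cases "m = \<infinity>")
    case True
    then have "obj_val c x d' = m" using ml[OF \<open>d' \<in> D\<close>] by simp
    then show ?thesis using \<open>d' \<in> D\<close> Im ml by auto
  next
    case False
    obtain B where B: "\<forall>y\<in>u ` D. norm y \<le> B"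
      using compact_imp_bounded[OF compact_continuous_image[OF cu cpt]] bounded_iff by blast
    have "m \<ge> ereal (-B)"
      unfolding m_def
    proof (rule INF_greatest)
      fix d assume "d \<in> D"
      then have "-B \<le> u d" using B by force
      moreover have "c d \<ge> 0" using nn D \<open>d \<in> D\<close> by auto
      ultimately show "ereal (-B) \<le> obj_val c x d" unfolding obj_val_def u_def
        by (metis add.right_neutral add_mono ereal_less_eq(3))
    qed
    with False obtain r where r: "m = ereal r" by (cases m) auto
    have "\<exists>d\<in>D. obj_val c x d < ereal (r + 1 / (Suc n))" for n
    proof -
      have "m < ereal (r + 1 / Suc n)" using r by simp
      then show ?thesis unfolding m_def INF_less_iff .
    qed
    then obtain s where s: "\<And>n. s n \<in> D" "\<And>n. obj_val c x (s n) < ereal (r + 1 / Suc n)"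
      by metis
    obtain l f where l: "l \<in> D" "strict_mono f" "(s \<circ> f) \<longlonglongrightarrow> l"
      using compact_imp_seq_compact[OF cpt] s(1) unfolding seq_compact_def by metis
    have ul: "(\<lambda>n. u (s (f n))) \<longlonglongrightarrow> u l"
      using continuous_on_tendsto_compose[OF cu l(3) l(1)] s(1) by (simp add: o_def)
    have "c l \<le> ereal (r - u l) + ereal e" if e: "e > 0" for e
    proof -
      obtain T where T: "closed T" "{d\<in>{0..1}. c d \<le> ereal (r - u l + e)} = {0..1} \<inter> T"
        using lsc unfolding lsc_on_def closedin_closed by metis
      have ev1: "eventually (\<lambda>n. \<bar>u (s (f n)) - u l\<bar> < e/2) sequentially"
        using ul e unfolding tendsto_iff dist_real_def by (metis half_gt_zero)
      obtain N where N: "1 / Suc N < e/2" using e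
        by (metis half_gt_zero nat_approx_posE)
      have ev2: "eventually (\<lambda>n. 1 / Suc (f n) < e/2) sequentially"
        unfolding eventually_sequentially
      proof (intro exI allI impI)
        fix n assume "N \<le> n"
        then have "N \<le> f n" using l(2) by (meson order.trans seq_suble)
        then have "1 / real (Suc (f n)) \<le> 1 / Suc N" by (intro divide_left_mono) auto
        then show "1 / Suc (f n) < e/2" using N by linarith
      qed
      have "eventually (\<lambda>n. (s \<circ> f) n \<in> T) sequentially"
        using ev1 ev2
      proof eventually_elim
        case (elim n)
        let ?d = "s (f n)"
        have dD: "?d \<in> D" by (rule s(1))
        have "ereal (u ?d) + c ?d < ereal (r + 1 / Suc (f n))"
          using s(2)[of "f n"] unfolding obj_val_def u_def .
        then have c1: "c ?d < ereal (r + 1 / Suc (f n) - u ?d)"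
          by (cases "c ?d") (auto simp: algebra_simps)
        have "u l - u ?d < e/2" using elim(1) by linarith
        then have "r + 1 / Suc (f n) - u ?d \<le> r - u l + e" using elim(2) by linarith
        then have "ereal (r + 1 / Suc (f n) - u ?d) \<le> ereal (r - u l + e)" by simp
        with c1 have "c ?d \<le> ereal (r - u l + e)" by (meson less_imp_le order.trans)
        moreover have "?d \<in> {0..1}" using dD D by auto
        ultimately have "?d \<in> {0..1} \<inter> T" using T(2) by blast
        then show ?case by simp
      qed
      then have "l \<in> T" using T(1) l(3) by (intro Lim_in_closed_set) auto
      moreover have "l \<in> {0..1}" using l(1) D by auto
      ultimately have "c l \<le> ereal (r - u l + e)" using T(2) by blast
      then show ?thesis by simp
    qed
    then have "c l \<le> ereal (r - u l)" by (rule ereal_le_epsilon2)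
    then have "obj_val c x l \<le> m" unfolding obj_val_def r
      by (cases "c l") (auto simp: u_def)
    then have "obj_val c x l = m" using ml[OF l(1)] by simp
    then show ?thesis using l(1) Im ml by auto
  qed
qed

theorem proposition4:
  fixes D :: "real set" and c :: "real \<Rightarrow> ereal"
  assumes "D \<noteq> {}" and "closed D" and "D \<subseteq> {0<..<1}"
    and "\<forall>d\<in>{0..1}. c d \<ge> 0"
    and "grounded_on {0..1} c"
    and "lsc_on {0..1} c"
    and "c 1 = \<infinity>"
  shows "(unanimity D (pref c) \<longleftrightarrow> (\<forall>d\<in>{0..1} - D. c d = \<infinity>))
    \<and> (unanimity D (pref c) \<longrightarrow>
         (\<forall>x. Bseq x \<longrightarrow>
            (\<exists>d\<in>D. I_fun c x = obj_val c x d \<and> (\<forall>d'\<in>D. obj_val c x d \<le> obj_val c x d'))))"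
  using P_imp_U[OF assms(3)] U_imp_P[OF _ assms(2) assms(4) assms(3) assms(7)]
    P_imp_min[OF _ assms(2) assms(1) assms(4) assms(3) assms(6)]
  by blast

end
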